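(* Let $(C,\mathfrak p,\mathfrak d)$ be a regular $q$-cycle coalgebra such that $\mathfrak p_{11}^1=0$, $\mathfrak p=\mathfrak d$, $\mathfrak p_{i0}^1=\delta_{1i}$ for all $i$, and $\mathfrak p_{1j}^1=0$ for all $j>0$. Then $\mathfrak p_{i1}^1=0$ for all $i$.
   Context: $K$ is an algebraically closed field of characteristic $0$ and $n\ge2$. $C$ is the coalgebra dual to $K[y]/\langle y^n\rangle$: basis $x_0,\dots,x_{n-1}$, $\Delta(x_i)=\sum_{j+k=i}x_j\otimes x_k$, $\epsilon(x_i)=\delta_{i0}$; $C\otimes C$ has the tensor product coalgebra structure; Sweedler notation $\Delta(b)=b_{(1)}\otimes b_{(2)}$. For linear maps $\mathfrak p,\mathfrak d\colon C\otimes C\to C$ write $a\cdot b=\mathfrak p(a\otimes b)$, $a:b=\mathfrak d(a\otimes b)$, $\mathfrak p(x_i\otimes x_j)=\sum_{k=0}^{n-1}\mathfrak p_{ij}^kx_k$, $\mathfrak d(x_i\otimes x_j)=\sum_{k=0}^{n-1}\mathfrak d_{ij}^kx_k$ (indices in $\{0,\dots,n-1\}$). A triple $(C,\mathfrak p,\mathfrak d)$ with $\mathfrak p,\mathfrak d$ coalgebra morphisms is a regular $q$-magma coalgebra if there are coalgebra morphisms $a\otimes b\mapsto a^b$, $a\otimes b\mapsto a_b$ from $C\otimes C$ to $C$ with $a^{b_{(1)}}\cdot b_{(2)}=(a\cdot b_{(1)})^{b_{(2)}}=\epsilon(b)a$ and $(a:b_{(2)})_{b_{(1)}}=a_{b_{(2)}}:b_{(1)}=\epsilon(b)a$.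 It is a regular $q$-cycle coalgebra if moreover for all $a,b,c$: (1) $(a\cdot b_{(1)})\cdot(c:b_{(2)})=(a\cdot c_{(2)})\cdot(b\cdot c_{(1)})$; (2) $(a\cdot b_{(1)}):(c\cdot b_{(2)})=(a:c_{(2)})\cdot(b:c_{(1)})$; (3) $(a:b_{(1)}):(c:b_{(2)})=(a:c_{(2)}):(b\cdot c_{(1)})$. *)

theory Defs
  imports "HOL-Computational_Algebra.Polynomial"
begin

text \<open>
  C has basis x_0, ..., x_(n-1) with Delta(x_i) = sum_(j+k=i) x_j (x) x_k and eps(x_i) = delta_(i0).
  A linear map f : C (x) C -> C is given by its structure constants f i j k,
  f(x_i (x) x_j) = sum_k f i j k x_k, indices ranging over {..<n}.
\<close>

type_synonym 'a smap = "nat \<Rightarrow> nat \<Rightarrow> nat \<Rightarrow> 'a"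

text \<open>Coalgebra morphism C (x) C -> C (tensor product coalgebra structure on C (x) C):
  compatibility with comultiplication, compared coefficientwise on x_k1 (x) x_k2,
  and with the counit.\<close>
definition coalg_morphism :: "nat \<Rightarrow> 'a::field smap \<Rightarrow> bool" where
  "coalg_morphism n f \<longleftrightarrow>
     (\<forall>i<n. \<forall>j<n. \<forall>k1<n. \<forall>k2<n.
        (if k1 + k2 < n then f i j (k1 + k2) else 0) =
        (\<Sum>a\<le>i. \<Sum>c\<le>j. f a c k1 * f (i - a) (j - c) k2)) \<and>
     (\<forall>i<n. \<forall>j<n. f i j 0 = (if i = 0 \<and> j = 0 then 1 else 0))"

text \<open>Regular q-magma coalgebra: p, d coalgebra morphisms, and there are coalgebra
  morphisms u (a (x) b |-> a^b) and l (a (x) b |-> a_b) with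
  a^(b1) . b2 = (a . b1)^(b2) = eps(b) a  and  (a : b2)_(b1) = a_(b2) : b1 = eps(b) a,
  checked on basis elements a = x_i, b = x_j, coefficient of x_m.\<close>
definition regular_q_magma_coalg :: "nat \<Rightarrow> 'a::field smap \<Rightarrow> 'a smap \<Rightarrow> bool" where
  "regular_q_magma_coalg n p d \<longleftrightarrow>
     coalg_morphism n p \<and> coalg_morphism n d \<and>
     (\<exists>u l. coalg_morphism n u \<and> coalg_morphism n l \<and>
       (\<forall>i<n. \<forall>j<n. \<forall>m<n.
          (\<Sum>j1\<le>j. \<Sum>k<n. u i j1 k * p k (j - j1) m) = (if j = 0 \<and> i = m then 1 else 0) \<and>
          (\<Sum>j1\<le>j. \<Sum>k<n. p i j1 k * u k (j - j1) m) = (if j = 0 \<and> i = m then 1 else 0) \<and>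
          (\<Sum>j1\<le>j. \<Sum>k<n. d i (j - j1) k * l k j1 m) = (if j = 0 \<and> i = m then 1 else 0) \<and>
          (\<Sum>j1\<le>j. \<Sum>k<n. l i (j - j1) k * d k j1 m) = (if j = 0 \<and> i = m then 1 else 0)))"

text \<open>Regular q-cycle coalgebra: additionally identities (1)-(3), on basis elements
  a = x_i, b = x_j, c = x_l, coefficient of x_m (they are trilinear).\<close>
definition regular_q_cycle_coalg :: "nat \<Rightarrow> 'a::field smap \<Rightarrow> 'a smap \<Rightarrow> bool" where
  "regular_q_cycle_coalg n p d \<longleftrightarrow>
     regular_q_magma_coalg n p d \<and>
     (\<forall>i<n. \<forall>j<n. \<forall>l<n. \<forall>m<n.
        (\<Sum>j1\<le>j. \<Sum>k<n. \<Sum>k'<n. p i j1 k * d l (j - j1) k' * p k k' m) =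
        (\<Sum>l1\<le>l. \<Sum>k<n. \<Sum>k'<n. p i (l - l1) k * p j l1 k' * p k k' m) \<and>
        (\<Sum>j1\<le>j. \<Sum>k<n. \<Sum>k'<n. p i j1 k * p l (j - j1) k' * d k k' m) =
        (\<Sum>l1\<le>l. \<Sum>k<n. \<Sum>k'<n. d i (l - l1) k * d j l1 k' * p k k' m) \<and>
        (\<Sum>j1\<le>j. \<Sum>k<n. \<Sum>k'<n. d i j1 k * d l (j - j1) k' * d k k' m) =
        (\<Sum>l1\<le>l. \<Sum>k<n. \<Sum>k'<n. d i (l - l1) k * p j l1 k' * d k k' m))"

end

theory Submission
  imports Defs
begin

lemma sum_single:
  assumes "finite A" "\<And>x. x \<in> A \<Longrightarrow> x \<noteq> k \<Longrightarrow> f x = 0"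
  shows "sum f A = (if k \<in> A then f k else 0)"
proof (cases "k \<in> A")
  case True
  have "sum f A = f k + sum f (A - {k})" using assms(1) True by (simp add: sum.remove)
  also have "sum f (A - {k}) = 0" using assms(2) by (intro sum.neutral) auto
  finally show ?thesis using True by simp
next
  case False
  then show ?thesis using assms by (auto intro: sum.neutral)
qed
lemma sum2_delta:
  assumes "finite A" "finite B"
  shows "(\<Sum>x\<in>A. \<Sum>y\<in>B. if x = a \<and> y = b then v else 0) = (if a\<in>A \<and> b\<in>B then v else 0)"
proof -
  have "(\<Sum>x\<in>A. \<Sum>y\<in>B. if x = a \<and> y = b then v else 0) = 
     (\<Sum>x\<in>A. if x = a then (\<Sum>y\<in>B. if y = b then v else 0) else 0)"
    by (intro sum.cong refl) auto
  also have "\<dots> = (if a\<in>A \<and> b\<in>B then v else 0)" using assms by (simp add: sum.delta)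
  finally show ?thesis .
qed
lemma sum3_delta:
  assumes "finite A" "finite B" "finite C"
  shows "(\<Sum>x\<in>A. \<Sum>y\<in>B. \<Sum>z\<in>C. if x = a \<and> y = b \<and> z = c then v else 0) = (if a\<in>A \<and> b\<in>B \<and> c\<in>C then v else 0)"
proof -
  have "(\<Sum>x\<in>A. \<Sum>y\<in>B. \<Sum>z\<in>C. if x = a \<and> y = b \<and> z = c then v else 0) = 
     (\<Sum>x\<in>A. if x = a then (\<Sum>y\<in>B. \<Sum>z\<in>C. if y = b \<and> z = c then v else 0) else 0)"
    by (intro sum.cong refl) auto
  also have "\<dots> = (if a\<in>A \<and> b\<in>B \<and> c\<in>C then v else 0)" using assms by (simp add: sum.delta sum2_delta)
  finally show ?thesis .
qed

lemma cm_mult: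
  assumes "coalg_morphism n p" "i < n" "j < n" "k1 + k2 < n"
  shows "p i j (k1 + k2) = (\<Sum>a\<le>i. \<Sum>c\<le>j. p a c k1 * p (i - a) (j - c) k2)"
proof -
  have "k1 < n" "k2 < n" using assms by auto
  then show ?thesis using assms unfolding coalg_morphism_def by (metis (no_types, lifting))
qed

lemma cm_counit:
  assumes "coalg_morphism n p" "i < n" "j < n"
  shows "p i j 0 = (if i = 0 \<and> j = 0 then 1 else 0)"
  using assms unfolding coalg_morphism_def by blast

lemma a0:
  fixes p :: "'a::field smap"
  assumes cm: "coalg_morphism n p" and h: "\<forall>i<n. p i 0 1 = (if i = 1 then 1 else 0)"
  shows "K < n \<Longrightarrow> a < n \<Longrightarrow> p a 0 K = (if a = K then 1 else 0)"
proof (induction K arbitrary: a)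
  case 0
  then show ?case using cm_counit[OF cm] by simp
next
  case (Suc K)
  have "p a 0 (1 + K) = (\<Sum>a'\<le>a. \<Sum>c\<le>0. p a' c 1 * p (a - a') (0 - c) K)"
    using cm_mult[OF cm, of a 0 1 K] Suc.prems by simp
  also have "\<dots> = (\<Sum>a'\<le>a. p a' 0 1 * p (a - a') 0 K)" by simp
  also have "\<dots> = (if 1 \<in> {..a} then p 1 0 1 * p (a - 1) 0 K else 0)"
    using Suc.prems h by (intro sum_single) auto
  also have "\<dots> = (if a = Suc K then 1 else 0)"
    using Suc h by auto
  finally show ?case by simp
qed


lemma caseA:
  fixes p :: "'a::field smap"
  assumes n2: "2 \<le> n" and cm: "coalg_morphism n p"
    and h0: "\<forall>i<n. p i 0 1 = (if i = 1 then 1 else 0)"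
    and cyc: "\<forall>i<n. \<forall>j<n. \<forall>l<n.
        (\<Sum>j1\<le>j. \<Sum>k<n. \<Sum>k'<n. p i j1 k * p l (j - j1) k' * p k k' 1) =
        (\<Sum>l1\<le>l. \<Sum>k<n. \<Sum>k'<n. p i (l - l1) k * p j l1 k' * p k k' 1)"
    and qn: "q < n" and qb: "p 0 q 1 \<noteq> 0" and qmin: "\<forall>j<q. p 0 j 1 = 0"
  shows "\<forall>i<n. p i 1 1 = 0"
proof -
  have "p 0 0 1 = 0" using h0 qn by auto
  then have q0: "q \<noteq> 0" using qb by metis
  have L1: "1 \<le> K \<longrightarrow> K < n \<longrightarrow> (\<forall>j<q. p 0 j K = 0)" for K
  proof (induction K)
    case 0 then show ?case by simp
  next
    case (Suc K)
    show ?case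
    proof (cases "K = 0")
      case True then show ?thesis using qmin by simp
    next
      case False
      show ?thesis
      proof (intro impI allI)
        fix j assume "1 \<le> Suc K" "Suc K < n" "j < q"
        have "p 0 j (K + 1) = (\<Sum>a\<le>0. \<Sum>c\<le>j. p a c K * p (0 - a) (j - c) 1)"
          using cm_mult[OF cm, of 0 j K 1] \<open>Suc K < n\<close> \<open>j < q\<close> qn by simp
        also have "\<dots> = 0" using Suc.IH False \<open>Suc K < n\<close> \<open>j < q\<close> by (auto intro!: sum.neutral)
        finally show "p 0 j (Suc K) = 0" by simp
      qed
    qed
  qed
  have L2: "p 0 j K = 0" if "2 \<le> K" "K < n" "j \<le> q" for j K
  proof -
    have "p 0 j ((K - 1) + 1) = (\<Sum>a\<le>0. \<Sum>c\<le>j. p a c (K - 1) * p (0 - a) (j - c) 1)"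
      using cm_mult[OF cm, of 0 j "K - 1" 1] that qn by simp
    also have "\<dots> = (\<Sum>c\<le>j. p 0 c (K - 1) * p 0 (j - c) 1)" by simp
    also have "\<dots> = 0"
    proof (rule sum.neutral, rule ballI)
      fix c assume "c \<in> {..j}"
      show "p 0 c (K - 1) * p 0 (j - c) 1 = 0"
      proof (cases "c < q")
        case True then show ?thesis using L1[of "K - 1"] that by auto
      next
        case False then have "j - c = 0" using that \<open>c \<in> {..j}\<close> by auto
        then show ?thesis using qmin q0 by simp
      qed
    qed
    finally show ?thesis using that by simp
  qed
  have p0l: "p 0 l1 K' = (if K' = 0 \<and> l1 = 0 then 1 else if K' = 1 \<and> l1 = q then p 0 q 1 else 0)"
    if "l1 \<le> q" "K' < n" for l1 K'
  proof -
    consider "K' = 0" | "K' = 1" | "2 \<le> K'" by linarith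
    then show ?thesis
    proof cases
      case 1 then show ?thesis using cm_counit[OF cm, of 0 l1] that qn by simp
    next
      case 2 then show ?thesis using qmin that by auto
    next
      case 3 then show ?thesis using L2 that by auto
    qed
  qed
  show ?thesis
  proof (intro allI impI)
    fix i assume i: "i < n"
    have e1: "(\<Sum>j1\<le>0. \<Sum>k<n. \<Sum>k'<n. p i j1 k * p q (0 - j1) k' * p k k' 1) =
        (\<Sum>l1\<le>q. \<Sum>k<n. \<Sum>k'<n. p i (q - l1) k * p 0 l1 k' * p k k' 1)"
      using cyc[rule_format, of i 0 q] i qn n2 by simp
    have "(\<Sum>j1\<le>0. \<Sum>k<n. \<Sum>k'<n. p i j1 k * p q (0 - j1) k' * p k k' 1) =
          (\<Sum>k<n. \<Sum>k'<n. if k = i \<and> k' = q then p i q 1 else 0)"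
      using a0[OF cm h0] i qn by (auto intro!: sum.cong)
    also have "\<dots> = p i q 1" using i qn by (simp add: sum2_delta)
    finally have e2: "(\<Sum>j1\<le>0. \<Sum>k<n. \<Sum>k'<n. p i j1 k * p q (0 - j1) k' * p k k' 1) = p i q 1" .
    have "(\<Sum>l1\<le>q. \<Sum>k<n. \<Sum>k'<n. p i (q - l1) k * p 0 l1 k' * p k k' 1) =
       (\<Sum>l1\<le>q. \<Sum>k<n. \<Sum>k'<n. (if l1 = 0 \<and> k = 1 \<and> k' = 0 then p i q 1 else 0)
          + (if l1 = q \<and> k = i \<and> k' = 1 then p 0 q 1 * p i 1 1 else 0))"
    proof (intro sum.cong refl)
      fix l1 k k' assume "l1 \<in> {..q}" "k \<in> {..<n}" "k' \<in> {..<n}"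
      then show "p i (q - l1) k * p 0 l1 k' * p k k' 1 = (if l1 = 0 \<and> k = 1 \<and> k' = 0 then p i q 1 else 0)
          + (if l1 = q \<and> k = i \<and> k' = 1 then p 0 q 1 * p i 1 1 else 0)"
        using p0l[of l1 k'] h0 a0[OF cm h0, of k i] q0 i by auto
    qed
    also have "\<dots> = p i q 1 + p 0 q 1 * p i 1 1"
      using i qn n2 by (simp add: sum.distrib sum3_delta)
    finally show "p i 1 1 = 0" using e1 e2 qb by simp
  qed
qed


lemma lemC:
  fixes p :: "'a::field smap"
  assumes cm: "coalg_morphism n p"
    and h0: "\<forall>i<n. p i 0 1 = (if i = 1 then 1 else 0)"
    and H0: "\<forall>j<n. p 0 j 1 = 0"
    and H1: "\<forall>j<n. 0 < j \<longrightarrow> p 1 j 1 = 0"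
  shows "1 \<le> K \<Longrightarrow> K < n \<Longrightarrow> (\<forall>a<K. \<forall>b<n. p a b K = 0) \<and> (\<forall>b<n. p K b K = (if b = 0 then 1 else 0))"
proof (induction K)
  case 0 then show ?case by simp
next
  case (Suc K)
  show ?case
  proof (cases "K = 0")
    case True then show ?thesis using H0 H1 h0 Suc.prems by auto
  next
    case False
    then have IH: "(\<forall>a<K. \<forall>b<n. p a b K = 0) \<and> (\<forall>b<n. p K b K = (if b = 0 then 1 else 0))"
      using Suc by auto
    have key: "p a b (Suc K) = (if a = Suc K \<and> b = 0 then 1 else 0)" if ab: "a \<le> Suc K" "b < n" for a b
    proof -
      have "p a b (K + 1) = (\<Sum>a'\<le>a. \<Sum>c\<le>b. p a' c K * p (a - a') (b - c) 1)"
        using cm_mult[OF cm, of a b K 1] Suc.prems ab by simp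
      also have "\<dots> = (\<Sum>a'\<le>a. \<Sum>c\<le>b. if a' = K \<and> c = 0 then (if a = Suc K \<and> b = 0 then 1 else 0) else 0)"
      proof (intro sum.cong refl)
        fix a' c assume "a' \<in> {..a}" "c \<in> {..b}"
        then have a'c: "a' \<le> a" "c \<le> b" by auto
        consider "a' < K" | "a' = K" | "a' = Suc K" using a'c ab by linarith
        then show "p a' c K * p (a - a') (b - c) 1 = (if a' = K \<and> c = 0 then (if a = Suc K \<and> b = 0 then 1 else 0) else 0)"
        proof cases
          case 1 then show ?thesis using IH a'c ab by auto
        next
          case 2
          have "a - a' = 0 \<or> a - a' = 1" using ab 2 by linarith
          then show ?thesis using IH H0 H1 h0 a'c ab 2 Suc.prems by (auto simp: Suc_diff_le)
        next
          case 3 then have "a - a' = 0" using ab by simp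
          then show ?thesis using H0 3 ab a'c by auto
        qed
      qed
      also have "\<dots> = (if K \<in> {..a} \<and> 0 \<in> {..b} then (if a = Suc K \<and> b = 0 then 1 else 0) else 0)"
        by (rule sum2_delta) auto
      also have "\<dots> = (if a = Suc K \<and> b = 0 then 1 else 0)" by auto
      finally show ?thesis by simp
    qed
    show ?thesis using key by auto
  qed
qed

lemma lemD:
  fixes p :: "'a::field smap"
  assumes cm: "coalg_morphism n p"
    and h0: "\<forall>i<n. p i 0 1 = (if i = 1 then 1 else 0)"
    and IH: "\<forall>a<k. p a 1 1 = 0" and kn: "k < n"
    and K: "1 \<le> K" "Suc K < n" and a: "a \<le> k"
  shows "p a 1 (Suc K) = (if 1 \<le> a then p (a - 1) 1 K else 0)"
proof -
  have "p a 1 (1 + K) = (\<Sum>a'\<le>a. \<Sum>c\<le>1. p a' c 1 * p (a - a') (1 - c) K)"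
    using cm_mult[OF cm, of a 1 1 K] K a kn by simp
  also have "\<dots> = (\<Sum>a'\<le>a. \<Sum>c::nat\<le>1. if a' = 1 \<and> c = 0 then p (a - 1) 1 K else 0)"
  proof (intro sum.cong refl)
    fix a' c assume "a' \<in> {..a}" "c \<in> {..1::nat}"
    then have a'c: "a' \<le> a" "c \<le> 1" by auto
    show "p a' c 1 * p (a - a') (1 - c) K = (if a' = 1 \<and> c = 0 then p (a - 1) 1 K else 0)"
    proof (cases "c = 0")
      case True then show ?thesis using h0 a'c a kn by auto
    next
      case False
      then have 2: "c = 1" using a'c by simp
      have "p a' 1 1 * p (a - a') 0 K = 0"
      proof (cases "a' < k")
        case True then show ?thesis using IH by auto
      next
        case False then have "a - a' = 0" using a'c a by auto
        then show ?thesis using a0[OF cm h0, of K 0] K by auto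
      qed
      then show ?thesis using 2 by simp
    qed
  qed
  also have "\<dots> = (if 1 \<in> {..a} \<and> 0 \<in> {..1::nat} then p (a - 1) 1 K else 0)"
    by (rule sum2_delta) auto
  finally show ?thesis by simp
qed

lemma lemD2:
  fixes p :: "'a::field smap"
  assumes cm: "coalg_morphism n p"
    and h0: "\<forall>i<n. p i 0 1 = (if i = 1 then 1 else 0)"
    and IH: "\<forall>a<k. p a 1 1 = 0" and kn: "k < n"
  shows "2 \<le> K \<Longrightarrow> K < n \<Longrightarrow> \<forall>a\<le>k. p a 1 K = 0"
proof (induction K)
  case 0 then show ?case by simp
next
  case (Suc K)
  show ?case
  proof (intro allI impI)
    fix a assume a: "a \<le> k"
    have e: "p a 1 (Suc K) = (if 1 \<le> a then p (a - 1) 1 K else 0)"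
      using lemD[OF cm h0 IH kn _ _ a] Suc.prems by auto
    show "p a 1 (Suc K) = 0"
    proof (cases "K = 1")
      case True then show ?thesis using e IH a by auto
    next
      case False then show ?thesis using e Suc a by auto
    qed
  qed
qed


lemma caseB:
  fixes p :: "'a::field smap"
  assumes n2: "2 \<le> n" and cm: "coalg_morphism n p"
    and h0: "\<forall>i<n. p i 0 1 = (if i = 1 then 1 else 0)"
    and cyc: "\<forall>i<n. \<forall>j<n. \<forall>l<n.
        (\<Sum>j1\<le>j. \<Sum>k<n. \<Sum>k'<n. p i j1 k * p l (j - j1) k' * p k k' 1) =
        (\<Sum>l1\<le>l. \<Sum>k<n. \<Sum>k'<n. p i (l - l1) k * p j l1 k' * p k k' 1)"
    and H0: "\<forall>j<n. p 0 j 1 = 0"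
    and H1: "\<forall>j<n. 0 < j \<longrightarrow> p 1 j 1 = 0"
    and p111: "p 1 1 1 = 0"
  shows "\<forall>i<n. p i 1 1 = 0"
proof -
  have C: "(\<forall>a<K. \<forall>b<n. p a b K = 0) \<and> (\<forall>b<n. p K b K = (if b = 0 then 1 else 0))"
    if "1 \<le> K" "K < n" for K
    using lemC[OF cm h0 H0 H1] that by blast
  have main: "k < n \<longrightarrow> p k 1 1 = 0" for k
  proof (induction k rule: less_induct)
    case (less k)
    show ?case
    proof
      assume kn: "k < n"
      consider "k = 0" | "k = 1" | "2 \<le> k" by linarith
      then show "p k 1 1 = 0"
      proof cases
        case 1 then show ?thesis using H0 n2 by auto
      next
        case 2 then show ?thesis using p111 by simp
      next
        case 3
        have IH: "\<forall>a<k. p a 1 1 = 0" using less kn by auto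
        define r where "r = p k 1 1"
        have pk1: "p k 1 K' = (if K' = 1 then r else 0)" if "K' < n" for K'
        proof -
          consider "K' = 0" | "K' = 1" | "2 \<le> K'" by linarith
          then show ?thesis
          proof cases
            case 1 then show ?thesis using cm_counit[OF cm, of k 1] kn n2 3 by simp
          next
            case 2 then show ?thesis using r_def by simp
          next
            case 3 then show ?thesis using lemD2[OF cm h0 IH kn] that by auto
          qed
        qed
        have p1: "p 1 l1 K' = (if K' = 1 \<and> l1 = 0 then 1 else 0)" if "K' < n" "l1 < n" for K' l1
        proof -
          consider "K' = 0" | "K' = 1" | "2 \<le> K'" by linarith
          then show ?thesis
          proof cases
            case 1 then show ?thesis using cm_counit[OF cm, of 1 l1] that n2 by simp
          next
            case 2 then show ?thesis using H1 h0 that n2 by auto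
          next
            case 3 then show ?thesis using C[of K'] that by auto
          qed
        qed
        have e1: "(\<Sum>j1\<le>1. \<Sum>K<n. \<Sum>K'<n. p k j1 K * p k (1 - j1) K' * p K K' 1) =
            (\<Sum>l1\<le>k. \<Sum>K<n. \<Sum>K'<n. p k (k - l1) K * p 1 l1 K' * p K K' 1)"
          using cyc[rule_format, of k 1 k] kn n2 by simp
        have "(\<Sum>j1\<le>1. \<Sum>K<n. \<Sum>K'<n. p k j1 K * p k (1 - j1) K' * p K K' 1) =
            (\<Sum>j1::nat\<le>1. \<Sum>K<n. \<Sum>K'<n. if j1 = 0 \<and> K = k \<and> K' = 1 then r * r else 0)"
        proof (intro sum.cong refl)
          fix j1 K K' assume "j1 \<in> {..1::nat}" "K \<in> {..<n}" "K' \<in> {..<n}"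
          then have b: "j1 \<le> 1" "K < n" "K' < n" by auto
          show "p k j1 K * p k (1 - j1) K' * p K K' 1 = (if j1 = 0 \<and> K = k \<and> K' = 1 then r * r else 0)"
          proof (cases "j1 = 0")
            case True then show ?thesis
              using a0[OF cm h0, of K k] pk1[of K'] b kn r_def by auto
          next
            case False then have "j1 = 1" using b by simp
            then show ?thesis
              using a0[OF cm h0, of K' k] pk1[of K] b kn H1 3 by auto
          qed
        qed
        also have "\<dots> = r * r" using kn n2 by (subst sum3_delta) auto
        finally have e2: "(\<Sum>j1\<le>1. \<Sum>K<n. \<Sum>K'<n. p k j1 K * p k (1 - j1) K' * p K K' 1) = r * r" .
        have e3: "(\<Sum>l1\<le>k. \<Sum>K<n. \<Sum>K'<n. p k (k - l1) K * p 1 l1 K' * p K K' 1) = 0"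
        proof (rule sum.neutral, rule ballI)
          fix l1 assume "l1 \<in> {..k}"
          then have l1: "l1 < n" using kn by auto
          show "(\<Sum>K<n. \<Sum>K'<n. p k (k - l1) K * p 1 l1 K' * p K K' 1) = 0"
          proof (rule sum.neutral, rule ballI)
            fix K assume "K \<in> {..<n}"
            then have K: "K < n" by simp
            show "(\<Sum>K'<n. p k (k - l1) K * p 1 l1 K' * p K K' 1) = 0"
            proof (rule sum.neutral, rule ballI)
              fix K' assume "K' \<in> {..<n}"
              then have K': "K' < n" by simp
              have z: "p k k K * p K 1 1 = 0"
              proof -
                consider "K < k" | "K = k" | "k < K" by linarith
                then show ?thesis
                proof cases
                  case 1 then show ?thesis using IH by simp
                next
                  case 2 then show ?thesis using C[of k] kn 3 by auto
                next
                  case 3 then show ?thesis using C[of K] K kn by auto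
                qed
              qed
              show "p k (k - l1) K * p 1 l1 K' * p K K' 1 = 0"
                using p1[OF K' l1] z by auto
            qed
          qed
        qed
        have "r * r = 0" using e1 e2 e3 by simp
        then show ?thesis using r_def by simp
      qed
    qed
  qed
  show ?thesis using main by blast
qed

theorem proposition7p1:
  fixes n :: nat and p d :: "'a::{alg_closed_field, field_char_0} smap"
  assumes "n \<ge> 2"
    and "regular_q_cycle_coalg n p d"
    and "p 1 1 1 = 0"
    and "\<forall>i<n. \<forall>j<n. \<forall>k<n. p i j k = d i j k"
    and "\<forall>i<n. p i 0 1 = (if i = 1 then 1 else 0)"
    and "\<forall>j<n. j > 0 \<longrightarrow> p 1 j 1 = 0"
  shows "\<forall>i<n. p i 1 1 = 0"
proof -
  have cm: "coalg_morphism n p" using assms(2)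
    unfolding regular_q_cycle_coalg_def regular_q_magma_coalg_def by blast
  have cycd: "\<forall>i<n. \<forall>j<n. \<forall>l<n. \<forall>m<n.
        (\<Sum>j1\<le>j. \<Sum>k<n. \<Sum>k'<n. p i j1 k * d l (j - j1) k' * p k k' m) =
        (\<Sum>l1\<le>l. \<Sum>k<n. \<Sum>k'<n. p i (l - l1) k * p j l1 k' * p k k' m)"
    using assms(2) unfolding regular_q_cycle_coalg_def by blast
  have cyc: "\<forall>i<n. \<forall>j<n. \<forall>l<n.
        (\<Sum>j1\<le>j. \<Sum>k<n. \<Sum>k'<n. p i j1 k * p l (j - j1) k' * p k k' 1) =
        (\<Sum>l1\<le>l. \<Sum>k<n. \<Sum>k'<n. p i (l - l1) k * p j l1 k' * p k k' 1)"
  proof (intro allI impI)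
    fix i j l assume ijl: "i < n" "j < n" "l < n"
    have "(\<Sum>j1\<le>j. \<Sum>k<n. \<Sum>k'<n. p i j1 k * p l (j - j1) k' * p k k' 1) =
          (\<Sum>j1\<le>j. \<Sum>k<n. \<Sum>k'<n. p i j1 k * d l (j - j1) k' * p k k' 1)"
      using assms(4) ijl by (intro sum.cong refl) auto
    also have "\<dots> = (\<Sum>l1\<le>l. \<Sum>k<n. \<Sum>k'<n. p i (l - l1) k * p j l1 k' * p k k' 1)"
      using cycd[rule_format, of i j l 1] ijl assms(1) by simp
    finally show "(\<Sum>j1\<le>j. \<Sum>k<n. \<Sum>k'<n. p i j1 k * p l (j - j1) k' * p k k' 1) =
        (\<Sum>l1\<le>l. \<Sum>k<n. \<Sum>k'<n. p i (l - l1) k * p j l1 k' * p k k' 1)" .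
  qed
  show ?thesis
  proof (cases "\<forall>j<n. p 0 j 1 = 0")
    case True
    show ?thesis using caseB[OF assms(1) cm assms(5) cyc True assms(6) assms(3)] .
  next
    case False
    define q where "q = (LEAST j. j < n \<and> p 0 j 1 \<noteq> 0)"
    have ex: "\<exists>j. j < n \<and> p 0 j 1 \<noteq> 0" using False by auto
    have q1: "q < n \<and> p 0 q 1 \<noteq> 0" unfolding q_def using LeastI_ex[OF ex] .
    have q2: "\<forall>j<q. p 0 j 1 = 0"
    proof (intro allI impI)
      fix j assume "j < q"
      then have "\<not> (j < n \<and> p 0 j 1 \<noteq> 0)" unfolding q_def by (rule not_less_Least)
      then show "p 0 j 1 = 0" using \<open>j < q\<close> q1 by auto
    qed
    show ?thesis using caseA[OF assms(1) cm assms(5) cyc _ _ q2] q1 by blast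
  qed
qed

end
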